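(* Let $N\ge 1$ be an integer, let $c\neq 0$ be a constant, and let $c_i,d_i,p_i,q_i,\xi_{i0},\eta_{i0}$ ($i=1,\dots,N$) be arbitrary real or complex parameters. For integers $n,m$ define $$\phi_n^{(i)}(m)=c_ip_i^n(1-cp_i)^m e^{\xi_i}+d_iq_i^n(1-cq_i)^m e^{\eta_i},\qquad \xi_i=p_ix_1+p_i^{-1}x_{-1}+\xi_{i0},\quad \eta_i=q_ix_1+q_i^{-1}x_{-1}+\eta_{i0},$$ and the Casorati determinant $\tau_{n,m}(x_{-1},x_1)=\det\big(\phi^{(i)}_{n+j-1}(m)\big)_{1\le i,j\le N}$. Then for all integers $n,m$: $$\Big(\tfrac12 D_{x_{-1}}D_{x_1}-1\Big)\tau_{n,m}\cdot\tau_{n,m}=-\tau_{n+1,m}\tau_{n-1,m},$$ $$\big(c^{-1}D_{x_{-1}}-1\big)\tau_{n,m}\cdot\tau_{n,m+1}+\tau_{n+1,m}\tau_{n-1,m+1}=0,$$ $$\big(cD_{x_1}-1\big)\tau_{n+1,m}\cdot\tau_{n,m+1}+\tau_{n,m}\tau_{n+1,m+1}=0.$$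
   Context: Hirota bilinear operators: for functions $a,b$ of variables $x,y,\dots$, $D_x^{k}D_y^{l}\,a\cdot b=(\partial_x-\partial_{x'})^{k}(\partial_y-\partial_{y'})^{l}a(x,y)b(x',y')\big|_{x'=x,\,y'=y}$; a constant term "$-1$" acts as $-1\cdot a\cdot b=-ab$. *)

theory Defs
  imports "HOL-Analysis.Derivative" "Jordan_Normal_Form.Determinant"
begin

text \<open>Partial derivatives of a function of two complex variables (x_{-1}, x_1).\<close>
definition pd1 :: "(complex \<Rightarrow> complex \<Rightarrow> complex) \<Rightarrow> complex \<Rightarrow> complex \<Rightarrow> complex" where
  "pd1 f x y = deriv (\<lambda>s. f s y) x"

definition pd2 :: "(complex \<Rightarrow> complex \<Rightarrow> complex) \<Rightarrow> complex \<Rightarrow> complex \<Rightarrow> complex" where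
  "pd2 f x y = deriv (\<lambda>t. f x t) y"

definition hirota1 :: "(complex \<Rightarrow> complex \<Rightarrow> complex) \<Rightarrow> (complex \<Rightarrow> complex \<Rightarrow> complex) \<Rightarrow> complex \<Rightarrow> complex \<Rightarrow> complex" where
  "hirota1 a b x y = pd1 a x y * b x y - a x y * pd1 b x y"

definition hirota2 :: "(complex \<Rightarrow> complex \<Rightarrow> complex) \<Rightarrow> (complex \<Rightarrow> complex \<Rightarrow> complex) \<Rightarrow> complex \<Rightarrow> complex \<Rightarrow> complex" where
  "hirota2 a b x y = pd2 a x y * b x y - a x y * pd2 b x y"

definition hirota12 :: "(complex \<Rightarrow> complex \<Rightarrow> complex) \<Rightarrow> (complex \<Rightarrow> complex \<Rightarrow> complex) \<Rightarrow> complex \<Rightarrow> complex \<Rightarrow> complex" where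
  "hirota12 a b x y = pd1 (pd2 a) x y * b x y - pd1 a x y * pd2 b x y
                      - pd2 a x y * pd1 b x y + a x y * pd1 (pd2 b) x y"

text \<open>The entries phi^{(i)}_n(m) as functions of (x_{-1}, x_1); i is 0-based.\<close>
definition phi :: "complex \<Rightarrow> (nat \<Rightarrow> complex) \<Rightarrow> (nat \<Rightarrow> complex) \<Rightarrow> (nat \<Rightarrow> complex) \<Rightarrow> (nat \<Rightarrow> complex)
    \<Rightarrow> (nat \<Rightarrow> complex) \<Rightarrow> (nat \<Rightarrow> complex) \<Rightarrow> nat \<Rightarrow> int \<Rightarrow> int \<Rightarrow> complex \<Rightarrow> complex \<Rightarrow> complex" where
  "phi c cc dd p q xi0 eta0 i n m xm x =
     cc i * p i powi n * (1 - c * p i) powi m * exp (p i * x + inverse (p i) * xm + xi0 i)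
   + dd i * q i powi n * (1 - c * q i) powi m * exp (q i * x + inverse (q i) * xm + eta0 i)"

definition tau :: "nat \<Rightarrow> complex \<Rightarrow> (nat \<Rightarrow> complex) \<Rightarrow> (nat \<Rightarrow> complex) \<Rightarrow> (nat \<Rightarrow> complex) \<Rightarrow> (nat \<Rightarrow> complex)
    \<Rightarrow> (nat \<Rightarrow> complex) \<Rightarrow> (nat \<Rightarrow> complex) \<Rightarrow> int \<Rightarrow> int \<Rightarrow> complex \<Rightarrow> complex \<Rightarrow> complex" where
  "tau N c cc dd p q xi0 eta0 n m xm x =
     det (mat N N (\<lambda>(i, j). phi c cc dd p q xi0 eta0 i (n + int j) m xm x))"

end

theory Submission
  imports Defs
begin

definition Det :: "nat \<Rightarrow> (nat \<Rightarrow> nat \<Rightarrow> complex) \<Rightarrow> complex" where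
  "Det N F = det (mat N N (\<lambda>(i,j). F j i))"

lemma Det_formula: "Det N F = (\<Sum>p | p permutes {0..<N}. signof p * (\<Prod>j<N. F j (p j)))"
  unfolding Det_def
  apply (subst det_col[of _ N])
   apply simp
  apply (rule sum.cong, simp)
  apply (rule arg_cong[where f="\<lambda>x. _ * x"])
  apply (rule prod.cong, simp)
  by (simp add: permutes_in_image)

lemma Det_cong: "(\<And>j i. j<N \<Longrightarrow> i<N \<Longrightarrow> F j i = G j i) \<Longrightarrow> Det N F = Det N G"
  unfolding Det_def by (intro arg_cong[of _ _ det] eq_matI) auto

lemma prod_upd: fixes N :: nat shows "k<N \<Longrightarrow> (\<Prod>j<N. (F(k:=w)) j (p j)) = w (p k) * (\<Prod>j\<in>{..<N}-{k}. F j (p j))"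
proof -
  assume k: "k<N"
  have "(\<Prod>j<N. (F(k:=w)) j (p j)) = (F(k:=w)) k (p k) * (\<Prod>j\<in>{..<N}-{k}. (F(k:=w)) j (p j))"
    by (rule prod.remove) (use k in auto)
  also have "\<dots> = w (p k) * (\<Prod>j\<in>{..<N}-{k}. F j (p j))" by (auto intro!: prod.cong)
  finally show ?thesis .
qed

lemma Det_linear: assumes "k<N"
  shows "Det N (F(k := (\<lambda>i. a * u i + b * v i))) = a * Det N (F(k:=u)) + b * Det N (F(k:=v))"
  unfolding Det_formula prod_upd[OF assms]
  by (simp add: algebra_simps sum.distrib sum_distrib_left)

lemma Det_eq_cols: assumes "j<N" "k<N" "j\<noteq>k" "\<And>i. i<N \<Longrightarrow> F j i = F k i"
  shows "Det N F = 0"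
  unfolding Det_def
  apply (rule det_identical_columns[of _ N j k])
  using assms by (auto intro!: eq_vecI)

lemma Det_swap: assumes "a<N" "b<N" "a\<noteq>b" "G a = F b" "G b = F a" "\<And>j. j \<noteq> a \<Longrightarrow> j \<noteq> b \<Longrightarrow> G j = F j"
  shows "Det N G = - Det N F"
proof -
  have "mat N N (\<lambda>(i,j). G j i) = swapcols a b (mat N N (\<lambda>(i,j). F j i))"
    unfolding mat_swapcols_def using assms by (intro eq_matI) auto
  then show ?thesis unfolding Det_def using det_swapcols[OF assms(1-3), of "mat N N (\<lambda>(i,j). F j i)"]
    by simp
qed

lemma Det_deriv:
  assumes "\<And>j i. j<N \<Longrightarrow> i<N \<Longrightarrow> ((\<lambda>s. F s j i) has_field_derivative F' j i) (at z)"
  shows "((\<lambda>s. Det N (F s)) has_field_derivative (\<Sum>k<N. Det N ((F z)(k := F' k)))) (at z)"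
proof -
  have e: "(\<lambda>s. Det N (F s)) = (\<lambda>s. \<Sum>p | p permutes {0..<N}. signof p * (\<Prod>j<N. F s j (p j)))"
    by (simp add: Det_formula)
  have r: "(\<Sum>k<N. Det N ((F z)(k := F' k))) = (\<Sum>p | p permutes {0..<N}. signof p * 
     (\<Sum>k<N. F' k (p k) * (\<Prod>j\<in>{..<N}-{k}. F z j (p j))))"
    unfolding Det_formula
    apply (subst sum.swap)
    apply (simp only: sum_distrib_left)
    apply (rule sum.cong[OF refl])+
    apply (subst prod_upd)
    by auto
  show ?thesis unfolding e r
    apply (rule DERIV_sum)
    apply (rule DERIV_cmult)
    apply (rule has_field_derivative_prod)
    apply (rule assms)
    by (auto simp: permutes_in_image)
qed

lemma Det_linsum: assumes "k<N" "finite S"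
  shows "Det N (F(k := (\<lambda>i. \<Sum>l\<in>S. a l * g l i))) = (\<Sum>l\<in>S. a l * Det N (F(k:=g l)))"
  unfolding Det_formula prod_upd[OF assms(1)]
  apply (simp add: sum_distrib_left sum_distrib_right)
  apply (subst sum.swap)
  by (simp add: algebra_simps)

definition DL :: "(nat \<Rightarrow> complex) list \<Rightarrow> complex" where
  "DL cs = Det (length cs) (nth cs)"

lemma nth_upd_eq: "nth (P @ w # S) = (nth (P @ u # S))(length P := w)"
  by (rule ext) (auto simp: nth_append nth_Cons split: nat.splits)

lemma DL_upd: "DL (P @ w # S) = Det (Suc (length P + length S)) ((nth (P @ u # S))(length P := w))"
  unfolding DL_def by (subst nth_upd_eq[where u=u]) simp

lemma DL_lin: "DL (P @ (\<lambda>i. a * u i + b * v i) # S) = a * DL (P @ u # S) + b * DL (P @ v # S)"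
  unfolding DL_upd[where u=u]
  by (rule Det_linear) simp

lemma DL_lin1: "DL (P @ (\<lambda>i. u i + b * v i) # S) = DL (P @ u # S) + b * DL (P @ v # S)"
  using DL_lin[of P 1 u b v S] by simp

lemma DL_linsum: assumes "finite T"
  shows "DL (P @ (\<lambda>i. \<Sum>l\<in>T. a l * g l i) # S) = (\<Sum>l\<in>T. a l * DL (P @ g l # S))"
  unfolding DL_upd[where u="g undefined"]
  by (rule Det_linsum) (simp add: assms)+

lemma DL_dup: "DL (P @ x # Q @ x # S) = 0"
proof -
  have 1: "(P @ x # Q @ x # S) ! length P = x" by simp
  have 2: "(P @ x # Q @ x # S) ! (length P + Suc (length Q)) = x"
    by (simp add: nth_append)
  show ?thesis unfolding DL_def
    by (rule Det_eq_cols[of "length P" _ "length P + Suc (length Q)"]) (simp_all only: 1 2, simp_all)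
qed

lemma nth_swap_other: "j \<noteq> length P \<Longrightarrow> j \<noteq> Suc (length P) \<Longrightarrow> (P @ x # y # S) ! j = (P @ y # x # S) ! j"
proof (cases "j < length P")
  case True then show ?thesis by (simp add: nth_append)
next
  case False
  moreover assume "j \<noteq> length P" "j \<noteq> Suc (length P)"
  ultimately obtain d where "j = length P + Suc (Suc d)" by (metis add_Suc_right less_imp_Suc_add linorder_neqE_nat not_less_eq)
  then show ?thesis by (simp add: nth_append)
qed

lemma DL_swap: "DL (P @ x # y # S) = - DL (P @ y # x # S)"
proof -
  have l: "length (P @ y # x # S) = length (P @ x # y # S)" by simp
  show ?thesis unfolding DL_def l
    apply (rule Det_swap[of "length P" _ "Suc (length P)"])
    using nth_swap_other[of _ P x y S] by (simp_all add: nth_append)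
qed

lemma DL_move: "DL (P @ x # U @ S) = (-1)^length U * DL (P @ U @ x # S)"
proof (induction U arbitrary: P)
  case Nil then show ?case by simp
next
  case (Cons u U)
  have "DL (P @ x # (u # U) @ S) = - DL (P @ u # x # U @ S)" unfolding append_Cons by (rule DL_swap)
  also have "\<dots> = - ((-1)^length U * DL ((P @ [u]) @ U @ x # S))" using Cons[of "P @ [u]"] by (simp del: DL_swap)
  finally show ?case by simp
qed

lemma nth_del: "k < length w \<Longrightarrow> j < length w - 1 \<Longrightarrow>
   (take k w @ drop (Suc k) w) ! j = w ! (if j < k then j else Suc j)"
  by (auto simp: nth_append min_def)

lemma sylvester: assumes "length w = Suc N" "i < N"
  shows "(\<Sum>k<Suc N. (-1)^k * (w!k) i * DL (take k w @ drop (Suc k) w)) = 0"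
proof -
  define B where "B = mat (Suc N) (Suc N) (\<lambda>(r,k). if r = 0 then (w!k) i else (w!k) (r-1))"
  have B: "B \<in> carrier_mat (Suc N) (Suc N)" unfolding B_def by simp
  have "det B = 0"
    apply (rule det_identical_rows[OF B, of 0 "Suc i"])
    using assms unfolding B_def by (auto intro!: eq_vecI)
  moreover have "det B = (\<Sum>k<Suc N. B $$ (0,k) * cofactor B 0 k)"
    by (rule laplace_expansion_row[OF B]) simp
  moreover have "B $$ (0,k) * cofactor B 0 k = (-1)^k * (w!k) i * DL (take k w @ drop (Suc k) w)"
    if k: "k < Suc N" for k
  proof -
    have "mat_delete B 0 k = mat N N (\<lambda>(i',j'). ((take k w @ drop (Suc k) w) ! j') i')"
      unfolding mat_delete_def B_def
      apply (rule eq_matI)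
      using k assms by (auto simp: nth_del)
    moreover have "length (take k w @ drop (Suc k) w) = N" using k assms by simp
    ultimately show ?thesis unfolding cofactor_def DL_def Det_def using k B_def assms(1) by simp
  qed
  ultimately show ?thesis by simp
qed

lemma pluecker: assumes "length U = K"
  shows "DL (U@[v1,v2]) * DL (U@[v3,v4]) - DL (U@[v1,v3]) * DL (U@[v2,v4])
       + DL (U@[v1,v4]) * DL (U@[v2,v3]) = 0"
proof -
  define w where "w = U @ [v2,v3,v4]"
  have lw: "length w = Suc (K+2)" using assms w_def by simp
  define Z where "Z = (\<lambda>i. \<Sum>k<Suc (K+2). ((-1)^k * DL (take k w @ drop (Suc k) w)) * (w!k) i)"
  have Z0: "Z i = 0" if "i < K+2" for i
    using sylvester[OF lw that] unfolding Z_def by (simp add: ac_simps)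
  have "DL (U @ v1 # Z # []) = DL (U @ v1 # (\<lambda>i. 0 * v1 i + 0 * v1 i) # [])"
    unfolding DL_def apply simp apply (rule Det_cong) using Z0 assms by (auto simp: nth_append nth_Cons split: nat.splits)
  also have "\<dots> = 0" using DL_lin[of "U @ [v1]" 0 v1 0 v1 "[]"] by simp
  finally have "DL ((U @ [v1]) @ Z # []) = 0" by simp
  then have "(\<Sum>k<Suc (K+2). ((-1)^k * DL (take k w @ drop (Suc k) w)) * DL ((U @ [v1]) @ w!k # [])) = 0"
    unfolding Z_def by (subst (asm) DL_linsum) auto
  moreover have "DL ((U @ [v1]) @ w!k # []) = 0" if "k < K" for k
  proof -
    have "DL ((U @ [v1]) @ w!k # []) = Det (K+2) (nth (U @ [v1, w!k]))" unfolding DL_def using assms by simp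
    also have "\<dots> = 0"
      apply (rule Det_eq_cols[of k _ "K+1"]) using that assms by (auto simp: w_def nth_append)
    finally show ?thesis .
  qed
  ultimately have "(\<Sum>k\<in>{K, K+1, K+2}. ((-1)^k * DL (take k w @ drop (Suc k) w)) * DL ((U @ [v1]) @ w!k # [])) = 0"
    by (simp add: lessThan_Suc) (simp add: algebra_simps)
  moreover have "take K w @ drop (Suc K) w = U @ [v3,v4]" "take (K+1) w @ drop (Suc (K+1)) w = U @ [v2,v4]"
      "take (K+2) w @ drop (Suc (K+2)) w = U @ [v2,v3]" "w!K = v2" "w!(K+1) = v3" "w!(K+2) = v4"
    using assms unfolding w_def by (auto simp: nth_append)
  ultimately have "(-1)^K * (DL (U@[v1,v2]) * DL (U@[v3,v4]) - DL (U@[v1,v3]) * DL (U@[v2,v4])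
       + DL (U@[v1,v4]) * DL (U@[v2,v3])) = 0"
    by (simp add: algebra_simps)
  then show ?thesis by simp
qed



lemma Det_DL: "length L = N' \<Longrightarrow> (\<And>j i. j<N' \<Longrightarrow> i<N' \<Longrightarrow> G j i = (L!j) i) \<Longrightarrow> Det N' G = DL L"
  unfolding DL_def by (auto intro: Det_cong)

lemma Det_upd_zero: "j<N' \<Longrightarrow> k<N' \<Longrightarrow> j\<noteq>k \<Longrightarrow> (\<And>i. i<N' \<Longrightarrow> w i = F j i) \<Longrightarrow> Det N' (F(k := w)) = 0"
  by (rule Det_eq_cols[of k N' j]) auto

lemma sum_last: "(M::nat) \<ge> 1 \<Longrightarrow> (\<And>k. k+1<M \<Longrightarrow> g k = 0) \<Longrightarrow> (\<Sum>k<M. g k) = (g (M-1) :: complex)"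
  by (cases M) (auto simp: lessThan_Suc)

lemma sum_first: "(M::nat) \<ge> 1 \<Longrightarrow> (\<And>k. 0<k \<Longrightarrow> k<M \<Longrightarrow> g k = 0) \<Longrightarrow> (\<Sum>k<M. g k) = (g 0 :: complex)"
  by (subst sum.remove[of _ 0]) (auto intro!: sum.neutral)

lemma sum_ends: "(M::nat) \<ge> 2 \<Longrightarrow> (\<And>k. 0<k \<Longrightarrow> k+1<M \<Longrightarrow> g k = 0) \<Longrightarrow> (\<Sum>k<M. g k) = g 0 + (g (M-1) :: complex)"
proof -
  assume M: "M \<ge> 2" and z: "\<And>k. 0<k \<Longrightarrow> k+1<M \<Longrightarrow> g k = 0"
  obtain L where L: "M = Suc L" "L \<ge> 1" using M by (cases M) auto
  have "(\<Sum>k<M. g k) = (\<Sum>k<L. g k) + g L" using L by simp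
  also have "(\<Sum>k<L. g k) = g 0" by (rule sum_first) (use L z in auto)
  finally show ?thesis using L by simp
qed

locale cas =
  fixes N :: nat and c :: complex and cc dd p q xi0 eta0 :: "nat \<Rightarrow> complex"
  assumes cnz: "c \<noteq> 0"
    and nz: "\<And>i. i < N \<Longrightarrow> p i \<noteq> 0 \<and> q i \<noteq> 0 \<and> 1 - c * p i \<noteq> 0 \<and> 1 - c * q i \<noteq> 0"
begin

definition AA :: "int \<Rightarrow> int \<Rightarrow> complex \<Rightarrow> complex \<Rightarrow> nat \<Rightarrow> complex" where
  "AA m k xm x = (\<lambda>i. if i < N then phi c cc dd p q xi0 eta0 i k m xm x else 0)"

lemma AA_shift: "AA m k xm x = (\<lambda>i. AA (m+1) k xm x i + c * AA m (k+1) xm x i)"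
proof (rule ext)
  fix i
  show "AA m k xm x i = AA (m+1) k xm x i + c * AA m (k+1) xm x i"
  proof (cases "i < N")
    case True
    note h = nz[OF True]
    have e1: "(1 - c * p i) powi (m+1) = (1 - c * p i) powi m * (1 - c * p i)"
      by (rule power_int_add_1) (use h in auto)
    have e2: "(1 - c * q i) powi (m+1) = (1 - c * q i) powi m * (1 - c * q i)"
      by (rule power_int_add_1) (use h in auto)
    have e3: "p i powi (k+1) = p i powi k * p i" by (rule power_int_add_1) (use h in auto)
    have e4: "q i powi (k+1) = q i powi k * q i" by (rule power_int_add_1) (use h in auto)
    show ?thesis using True unfolding AA_def phi_def e1 e2 e3 e4 by (simp add: algebra_simps)
  qed (simp add: AA_def)
qed

lemma AA_dx: "((\<lambda>t. AA m k xm t i) has_field_derivative AA m (k+1) xm x i) (at x)"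
proof (cases "i < N")
  case True
  note h = nz[OF True]
  have e3: "p i powi (k+1) = p i powi k * p i" by (rule power_int_add_1) (use h in auto)
  have e4: "q i powi (k+1) = q i powi k * q i" by (rule power_int_add_1) (use h in auto)
  show ?thesis using True unfolding AA_def phi_def e3 e4
    by (auto intro!: derivative_eq_intros simp: algebra_simps)
qed (simp add: AA_def)

lemma AA_dxm: "((\<lambda>s. AA m k s x i) has_field_derivative AA m (k-1) xm x i) (at xm)"
proof (cases "i < N")
  case True
  note h = nz[OF True]
  have e3: "p i powi k = p i powi (k-1) * p i" using power_int_add_1[of "p i" "k-1"] h by simp
  have e4: "q i powi k = q i powi (k-1) * q i" using power_int_add_1[of "q i" "k-1"] h by simp
  have i1: "\<And>z. p i * (inverse (p i) * z) = z" "\<And>z. q i * (inverse (q i) * z) = z"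
    using h by (simp_all add: mult.assoc[symmetric])
  show ?thesis using True h unfolding AA_def phi_def e3 e4
    by (auto intro!: derivative_eq_intros simp: algebra_simps i1)
qed (simp add: AA_def)


lemma T_Det: "tau N c cc dd p q xi0 eta0 n m xm x = Det N (\<lambda>j. AA m (n + int j) xm x)"
  unfolding tau_def Det_def AA_def by (intro arg_cong[of _ _ det] eq_matI) auto

lemma pd2_Det: assumes "N \<ge> 1"
  shows "pd2 (tau N c cc dd p q xi0 eta0 n m) xm x =
     Det N (\<lambda>j. if j < N - 1 then AA m (n + int j) xm x else AA m (n + int N) xm x)"
proof -
  have d: "((\<lambda>t. Det N (\<lambda>j. AA m (n + int j) xm t)) has_field_derivative
     (\<Sum>k<N. Det N ((\<lambda>j. AA m (n + int j) xm x)(k := AA m (n + int k + 1) xm x)))) (at x)"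
    by (rule Det_deriv) (rule AA_dx)
  have "(\<Sum>k<N. Det N ((\<lambda>j. AA m (n + int j) xm x)(k := AA m (n + int k + 1) xm x)))
     = Det N ((\<lambda>j. AA m (n + int j) xm x)(N-1 := AA m (n + int (N-1) + 1) xm x))"
    apply (rule sum_last[OF assms])
    subgoal for k by (rule Det_upd_zero[of "Suc k"]) (auto simp: algebra_simps)
    done
  also have "\<dots> = Det N (\<lambda>j. if j < N - 1 then AA m (n + int j) xm x else AA m (n + int N) xm x)"
    apply (rule Det_cong) using assms by (auto simp: of_nat_diff)
  finally show ?thesis unfolding pd2_def T_Det using DERIV_imp_deriv[OF d] by simp
qed

lemma pd1_Det: assumes "N \<ge> 1"
  shows "pd1 (tau N c cc dd p q xi0 eta0 n m) xm x =
     Det N (\<lambda>j. if j = 0 then AA m (n - 1) xm x else AA m (n + int j) xm x)"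
proof -
  have d: "((\<lambda>s. Det N (\<lambda>j. AA m (n + int j) s x)) has_field_derivative
     (\<Sum>k<N. Det N ((\<lambda>j. AA m (n + int j) xm x)(k := AA m (n + int k - 1) xm x)))) (at xm)"
    by (rule Det_deriv) (rule AA_dxm)
  have "(\<Sum>k<N. Det N ((\<lambda>j. AA m (n + int j) xm x)(k := AA m (n + int k - 1) xm x)))
     = Det N ((\<lambda>j. AA m (n + int j) xm x)(0 := AA m (n + int 0 - 1) xm x))"
    apply (rule sum_first[OF assms])
    subgoal for k by (rule Det_upd_zero[of "k - 1"]) (auto simp: algebra_simps of_nat_diff)
    done
  also have "\<dots> = Det N (\<lambda>j. if j = 0 then AA m (n - 1) xm x else AA m (n + int j) xm x)"
    by (rule Det_cong) auto
  finally show ?thesis unfolding pd1_def T_Det using DERIV_imp_deriv[OF d] by simp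
qed

lemma pd12_Det: assumes "N \<ge> 2"
  shows "pd1 (pd2 (tau N c cc dd p q xi0 eta0 n m)) xm x =
     Det N (\<lambda>j. if j = 0 then AA m (n - 1) xm x else if j < N - 1 then AA m (n + int j) xm x else AA m (n + int N) xm x)
     + tau N c cc dd p q xi0 eta0 n m xm x"
proof -
  define F where "F = (\<lambda>s j. if j < N - 1 then AA m (n + int j) s x else AA m (n + int N) s x)"
  define F' where "F' = (\<lambda>j. if j < N - 1 then AA m (n + int j - 1) xm x else AA m (n + int N - 1) xm x)"
  have e: "(\<lambda>s. pd2 (tau N c cc dd p q xi0 eta0 n m) s x) = (\<lambda>s. Det N (F s))"
    using pd2_Det assms unfolding F_def by auto
  have d: "((\<lambda>s. Det N (F s)) has_field_derivative (\<Sum>k<N. Det N ((F xm)(k := F' k)))) (at xm)"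
    by (rule Det_deriv) (auto simp: F_def F'_def intro: AA_dxm)
  have "(\<Sum>k<N. Det N ((F xm)(k := F' k))) = Det N ((F xm)(0 := F' 0)) + Det N ((F xm)(N-1 := F' (N-1)))"
    apply (rule sum_ends[OF assms])
    subgoal for k by (rule Det_upd_zero[of "k - 1"]) (auto simp: algebra_simps of_nat_diff F_def F'_def)
    done
  also have "Det N ((F xm)(0 := F' 0)) = Det N (\<lambda>j. if j = 0 then AA m (n - 1) xm x else if j < N - 1 then AA m (n + int j) xm x else AA m (n + int N) xm x)"
    apply (rule Det_cong) using assms by (auto simp: F_def F'_def)
  also have "Det N ((F xm)(N-1 := F' (N-1))) = tau N c cc dd p q xi0 eta0 n m xm x"
    unfolding T_Det apply (rule Det_cong) using assms by (auto simp: F_def F'_def of_nat_diff algebra_simps)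
  finally show ?thesis unfolding pd1_def e DERIV_imp_deriv[OF d] .
qed

end



lemma map_upt_Suc_cons: "map g [0..<Suc K] = g 0 # map (\<lambda>j. g (Suc j)) [0..<K]"
  by (induction K) auto

lemma colops: assumes "\<And>k. A k = (\<lambda>i. B k i + a * A (k+1) i)"
  shows "DL (P @ map (\<lambda>j. A (s + int j)) [0..<Suc K] @ S) = DL (P @ map (\<lambda>j. B (s + int j)) [0..<K] @ A (s + int K) # S)"
proof (induction K arbitrary: P s)
  case 0 then show ?case by simp
next
  case (Suc K)
  have m1: "map (\<lambda>j. A (s + int j)) [0..<Suc (Suc K)] = A s # map (\<lambda>j. A (s + 1 + int j)) [0..<Suc K]"
    by (subst map_upt_Suc_cons) (simp add: algebra_simps)
  have m2: "map (\<lambda>j. A (s + 1 + int j)) [0..<Suc K] = A (s+1) # map (\<lambda>j. A (s + 1 + 1 + int j)) [0..<K]"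
    by (subst map_upt_Suc_cons) (simp add: algebra_simps)
  have m3: "map (\<lambda>j. B (s + int j)) [0..<Suc K] = B s # map (\<lambda>j. B (s + 1 + int j)) [0..<K]"
    by (subst map_upt_Suc_cons) (simp add: algebra_simps)
  have "DL (P @ map (\<lambda>j. A (s + int j)) [0..<Suc (Suc K)] @ S)
      = DL (P @ (\<lambda>i. B s i + a * A (s+1) i) # map (\<lambda>j. A (s + 1 + int j)) [0..<Suc K] @ S)"
    unfolding m1 using assms[of s] by simp
  also have "\<dots> = DL (P @ B s # map (\<lambda>j. A (s + 1 + int j)) [0..<Suc K] @ S)
                 + a * DL (P @ A (s+1) # map (\<lambda>j. A (s + 1 + int j)) [0..<Suc K] @ S)"
    by (rule DL_lin1)
  also have "DL (P @ A (s+1) # map (\<lambda>j. A (s + 1 + int j)) [0..<Suc K] @ S) = 0"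
    unfolding m2 using DL_dup[of P "A (s+1)" "[]"] by simp
  also have "DL (P @ B s # map (\<lambda>j. A (s + 1 + int j)) [0..<Suc K] @ S)
     = DL ((P @ [B s]) @ map (\<lambda>j. B (s + 1 + int j)) [0..<K] @ A (s + 1 + int K) # S)"
    using Suc[of "P @ [B s]" "s+1"] by simp
  finally show ?case unfolding m3 by (simp add: algebra_simps)
qed

context cas
begin

abbreviation "T' \<equiv> tau N c cc dd p q xi0 eta0"

lemma Det1: "Det (Suc 0) F = F 0 0"
  unfolding Det_def by (subst det_single) auto

lemma N1_facts: assumes "N = 1"
  shows "T' n m xm x = AA m n xm x 0"
    "pd2 (T' n m) xm x = AA m (n+1) xm x 0"
    "pd1 (T' n m) xm x = AA m (n-1) xm x 0"
    "pd1 (pd2 (T' n m)) xm x = AA m n xm x 0"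
proof -
  show "T' n m xm x = AA m n xm x 0"
    using T_Det assms by (simp add: Det1)
  show p2: "\<And>xm. pd2 (T' n m) xm x = AA m (n+1) xm x 0"
    using pd2_Det assms by (simp add: Det1)
  show "pd1 (T' n m) xm x = AA m (n-1) xm x 0"
    using pd1_Det assms by (simp add: Det1)
  show "pd1 (pd2 (T' n m)) xm x = AA m n xm x 0"
    unfolding pd1_def p2
    using AA_dxm[where m=m and k="n+1" and x=x and i=0 and xm=xm] by (simp add: DERIV_imp_deriv)
qed


lemma AA_shift0: "AA (m+1) k xm x i = AA m k xm x i - c * AA m (k+1) xm x i"
  using fun_cong[OF AA_shift[of m k xm x], of i] by simp

lemma eqs_N1: assumes "N = 1"
  shows "(1/2) * hirota12 (T' n m) (T' n m) xm x - T' n m xm x * T' n m xm x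
        = - (T' (n+1) m xm x * T' (n-1) m xm x)"
    "inverse c * hirota1 (T' n m) (T' n (m+1)) xm x - T' n m xm x * T' n (m+1) xm x
        + T' (n+1) m xm x * T' (n-1) (m+1) xm x = 0"
    "c * hirota2 (T' (n+1) m) (T' n (m+1)) xm x - T' (n+1) m xm x * T' n (m+1) xm x
        + T' n m xm x * T' (n+1) (m+1) xm x = 0"
proof -
  note f = N1_facts[OF assms]
  have s1: "AA (m+1) (n-1) xm x 0 = AA m (n-1) xm x 0 - c * AA m n xm x 0" using AA_shift0[of m "n-1"] by simp
  have s2: "AA (m+1) n xm x 0 = AA m n xm x 0 - c * AA m (n+1) xm x 0" using AA_shift0[of m "n"] by simp
  have s3: "AA (m+1) (n+1) xm x 0 = AA m (n+1) xm x 0 - c * AA m (n+2) xm x 0" using AA_shift0[of m "n+1"] by (simp add: add.commute add.left_commute)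
  show "(1/2) * hirota12 (T' n m) (T' n m) xm x - T' n m xm x * T' n m xm x
        = - (T' (n+1) m xm x * T' (n-1) m xm x)"
    unfolding hirota12_def f by (simp add: field_simps)
  show "inverse c * hirota1 (T' n m) (T' n (m+1)) xm x - T' n m xm x * T' n (m+1) xm x
        + T' (n+1) m xm x * T' (n-1) (m+1) xm x = 0"
    unfolding hirota1_def f s1 s2 using cnz by (simp add: field_simps)
  show "c * hirota2 (T' (n+1) m) (T' n (m+1)) xm x - T' (n+1) m xm x * T' n (m+1) xm x
        + T' n m xm x * T' (n+1) (m+1) xm x = 0"
    unfolding hirota2_def f s2 s3 by (simp add: algebra_simps)
qed

end



lemma nth_s1: "j < K+2 \<Longrightarrow> (x # map f [0..<K] @ [y]) ! j = (if j = 0 then x else if j \<le> K then f (j-1) else y)"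
  by (cases j) (auto simp: nth_append)

lemma nth_s2: "j < K+2 \<Longrightarrow> (map f [0..<K] @ [x,y]) ! j = (if j < K then f j else if j = K then x else y)"
  by (auto simp: nth_append)

lemma nth_s3: "j < K+2 \<Longrightarrow> (x # y # map f [0..<K]) ! j = (if j = 0 then x else if j = 1 then y else f (j-2))"
  by (cases j; cases "j - 1") (auto simp: nth_append)

lemma Det_s1: assumes "N' = K+2" "\<And>i. i<N' \<Longrightarrow> G 0 i = x i"
   "\<And>j i. 0<j \<Longrightarrow> j \<le> K \<Longrightarrow> i<N' \<Longrightarrow> G j i = f (j-1) i" "\<And>i. i<N' \<Longrightarrow> G (K+1) i = y i"
  shows "Det N' G = DL (x # map f [0..<K] @ [y])"
  apply (rule Det_DL) using assms(1) apply simp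
  subgoal for j i using assms nth_s1[of j K x f y] by (cases "j = 0"; cases "j \<le> K"; cases "j = K+1") auto
  done

lemma Det_s2: assumes "N' = K+2" "\<And>j i. j < K \<Longrightarrow> i<N' \<Longrightarrow> G j i = f j i"
   "\<And>i. i<N' \<Longrightarrow> G K i = x i" "\<And>i. i<N' \<Longrightarrow> G (K+1) i = y i"
  shows "Det N' G = DL (map f [0..<K] @ [x, y])"
  apply (rule Det_DL) using assms(1) apply simp
  subgoal for j i using assms nth_s2[of j K f x y] by (cases "j < K"; cases "j = K"; cases "j = K+1") auto
  done

lemma Det_s3: assumes "N' = K+2" "\<And>i. i<N' \<Longrightarrow> G 0 i = x i" "\<And>i. i<N' \<Longrightarrow> G 1 i = y i"
   "\<And>j i. 1<j \<Longrightarrow> j < N' \<Longrightarrow> i<N' \<Longrightarrow> G j i = f (j-2) i"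
  shows "Det N' G = DL (x # y # map f [0..<K])"
  apply (rule Det_DL) using assms(1) apply simp
  subgoal for j i using assms nth_s3[of j K x y f] by (cases "j = 0"; cases "j = 1") auto
  done

lemma Det_map: assumes "\<And>j i. j < N' \<Longrightarrow> i<N' \<Longrightarrow> G j i = ((P @ map f [0..<K] @ S) ! j) i" "length P + K + length S = N'"
  shows "Det N' G = DL (P @ map f [0..<K] @ S)"
  by (rule Det_DL) (use assms in auto)

lemma mv1: "length U = K \<Longrightarrow> DL (x # U @ [y]) = (-1)^K * DL (U @ [x,y])"
  using DL_move[of "[]" x U "[y]"] by simp

lemma mv2: "length U = K \<Longrightarrow> DL (x # y # U) = DL (U @ [x,y])"
  using DL_move[of "[x]" y U "[]"] DL_move[of "[]" x U "[y]"] by simp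

lemma alg1: fixes sg P12 P34 P13 P24 P14 P23 :: complex
  assumes "P12 * P34 - P13 * P24 + P14 * P23 = 0" "sg * sg = 1"
  shows "1/2 * ((sg * P14 + sg * P23) * (sg * P23) - sg * P13 * (sg * P24) - sg * P24 * (sg * P13) + sg * P23 * (sg * P14 + sg * P23)) - sg * P23 * (sg * P23) = -(P34 * P12)"
proof -
  have "1/2 * ((sg * P14 + sg * P23) * (sg * P23) - sg * P13 * (sg * P24) - sg * P24 * (sg * P13) + sg * P23 * (sg * P14 + sg * P23)) - sg * P23 * (sg * P23)
     = (sg * sg) * (P14 * P23 - P13 * P24)" by (simp add: field_simps)
  also have "\<dots> = -(P34 * P12)" using assms by (simp add: algebra_simps)
  finally show ?thesis .
qed
lemma alg2: fixes sg c X P12 P34 P13 P24 P14 P23 :: complex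
  assumes "P12 * P34 - P13 * P24 + P14 * P23 = 0" "sg * sg = 1" "c \<noteq> 0" "c * X = P34"
  shows "inverse c * ((sg * P14 + c * (sg * P24)) * (sg * P23) - sg * P24 * (sg * P13)) - sg * P24 * (sg * P23) + X * P12 = 0"
proof -
  have "inverse c * ((sg * P14 + c * (sg * P24)) * (sg * P23) - sg * P24 * (sg * P13)) - sg * P24 * (sg * P23) + X * P12
     = inverse c * ((sg * sg) * (P14 * P23 - P24 * P13) + (c * X) * P12)" using assms(3) by (simp add: field_simps)
  also have "\<dots> = 0" using assms by (simp add: algebra_simps)
  finally show ?thesis .
qed

lemma alg3: fixes sg c Q R S Wt V P12 P34 P13 P24 P14 P23 :: complex
  assumes "P12 * P34 - P13 * P24 + P14 * P23 = 0" "Q = R + c * S" "P24 = P23 + c * R" "0 = Wt + c * S"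
    "V = P12 + c * P14" "P34 = - Wt"
  shows "c * (Q * (sg * P12) - P24 * (sg * P13)) - P24 * (sg * P12) + sg * V * P23 = 0"
proof -
  have e: "P34 = c * S" using assms(4,6) by (simp add: algebra_simps add_eq_0_iff)
  have "c * (Q * (sg * P12) - P24 * (sg * P13)) - P24 * (sg * P12) + sg * V * P23
      = sg * c * (P12 * P34 - P13 * P24 + P14 * P23)"
    unfolding assms(2) assms(3) e assms(5) by (simp add: algebra_simps)
  also have "\<dots> = 0" using assms(1) by simp
  finally show ?thesis .
qed

context cas
begin

lemma colops_AA: "DL (P @ map (\<lambda>j. AA m (s + int j) xm x) [0..<Suc K] @ S) = DL (P @ map (\<lambda>j. AA (m+1) (s + int j) xm x) [0..<K] @ AA m (s + int K) xm x # S)"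
  by (rule colops) (rule AA_shift)

lemma sh: "AA m k xm x = (\<lambda>i. AA (m+1) k xm x i + c * AA m (k + 1) xm x i)"
  by (rule AA_shift)


lemma eq1_N2: assumes N: "N = K+2"
  shows "(1/2) * hirota12 (T' n m) (T' n m) xm x - T' n m xm x * T' n m xm x
        = - (T' (n+1) m xm x * T' (n-1) m xm x)"
proof -
  let ?U = "map (\<lambda>j. AA m (n + 1 + int j) xm x) [0..<K]"
  have lU: "length ?U = K" by simp
  have N1: "N \<ge> 1" and N2: "N \<ge> 2" using N by auto
  have t0: "T' n m xm x = DL (AA m n xm x # ?U @ [AA m (n + int K + 1) xm x])"
    unfolding T_Det by (rule Det_s1[OF N]) (auto simp: algebra_simps of_nat_diff)
  have t1: "pd1 (T' n m) xm x = DL (AA m (n-1) xm x # ?U @ [AA m (n + int K + 1) xm x])"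
    unfolding pd1_Det[OF N1] 
    by (rule Det_s1[OF N]) (auto simp: algebra_simps of_nat_diff)
  have t2: "pd2 (T' n m) xm x = DL (AA m n xm x # ?U @ [AA m (n + int K + 2) xm x])"
    unfolding pd2_Det[OF N1]
    by (rule Det_s1[OF N]) (auto simp: algebra_simps of_nat_diff N)
  have t12: "pd1 (pd2 (T' n m)) xm x = DL (AA m (n-1) xm x # ?U @ [AA m (n + int K + 2) xm x]) + T' n m xm x"
    unfolding pd12_Det[OF N2]
    by (rule arg_cong[where f="\<lambda>z. z + _"], rule Det_s1[OF N]) (auto simp: algebra_simps of_nat_diff N)
  have tp: "T' (n+1) m xm x = DL (?U @ [AA m (n + int K + 1) xm x, AA m (n + int K + 2) xm x])"
    unfolding T_Det by (rule Det_s2[OF N]) (auto simp: algebra_simps of_nat_diff)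
  have tm: "T' (n-1) m xm x = DL (AA m (n-1) xm x # AA m n xm x # ?U)"
    unfolding T_Det by (rule Det_s3[OF N]) (auto simp: algebra_simps of_nat_diff)
  have pl: "DL (?U @ [AA m (n-1) xm x, AA m n xm x]) * DL (?U @ [AA m (n + int K + 1) xm x, AA m (n + int K + 2) xm x])
    - DL (?U @ [AA m (n-1) xm x, AA m (n + int K + 1) xm x]) * DL (?U @ [AA m n xm x, AA m (n + int K + 2) xm x])
    + DL (?U @ [AA m (n-1) xm x, AA m (n + int K + 2) xm x]) * DL (?U @ [AA m n xm x, AA m (n + int K + 1) xm x]) = 0"
    by (rule pluecker[OF lU])
  have s: "((-1::complex)^K) * (-1)^K = 1" by (simp add: power_mult_distrib[symmetric])
  show ?thesis unfolding hirota12_def t12 t1 t2 t0 tp tm mv1[OF lU] mv2[OF lU]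
    by (rule alg1[OF pl s])
qed


lemma eq23_N2: assumes N: "N = K+2"
  shows "inverse c * hirota1 (T' n m) (T' n (m+1)) xm x - T' n m xm x * T' n (m+1) xm x
        + T' (n+1) m xm x * T' (n-1) (m+1) xm x = 0"
    "c * hirota2 (T' (n+1) m) (T' n (m+1)) xm x - T' (n+1) m xm x * T' n (m+1) xm x
        + T' n m xm x * T' (n+1) (m+1) xm x = 0"
proof -
  let ?U = "map (\<lambda>j. AA (m+1) (n + 1 + int j) xm x) [0..<K]"
  have lU: "length ?U = K" by simp
  have N1: "N \<ge> 1" and N2: "N \<ge> 2" using N by auto
  have s: "((-1::complex)^K) * (-1)^K = 1" by (simp add: power_mult_distrib[symmetric])
  have u0: "T' n (m+1) xm x = DL (AA (m+1) n xm x # ?U @ [AA (m+1) (n + int K + 1) xm x])"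
    unfolding T_Det by (rule Det_s1[OF N]) (auto simp: algebra_simps of_nat_diff)
  have u1: "pd1 (T' n (m+1)) xm x = DL (AA (m+1) (n-1) xm x # ?U @ [AA (m+1) (n + int K + 1) xm x])"
    unfolding pd1_Det[OF N1] by (rule Det_s1[OF N]) (auto simp: algebra_simps of_nat_diff)
  have u2: "T' (n-1) (m+1) xm x = DL (AA (m+1) (n-1) xm x # AA (m+1) n xm x # ?U)"
    unfolding T_Det by (rule Det_s3[OF N]) (auto simp: algebra_simps of_nat_diff)
  have u3: "T' (n+1) (m+1) xm x = DL (?U @ [AA (m+1) (n + int K + 1) xm x, AA (m+1) (n + int K + 2) xm x])"
    unfolding T_Det by (rule Det_s2[OF N]) (auto simp: algebra_simps of_nat_diff)
  have u4: "pd2 (T' n (m+1)) xm x = DL (AA (m+1) n xm x # ?U @ [AA (m+1) (n + int K + 2) xm x])"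
    unfolding pd2_Det[OF N1] by (rule Det_s1[OF N]) (auto simp: algebra_simps of_nat_diff N)
  have w0: "T' n m xm x = DL ([] @ map (\<lambda>j. AA m (n + int j) xm x) [0..<Suc (Suc K)] @ [])"
    unfolding T_Det by (rule Det_DL) (auto simp: N simp del: upt_Suc)
  have v0: "T' n m xm x = DL (AA (m+1) n xm x # ?U @ [AA m (n + int K + 1) xm x])"
    apply (subst w0, subst colops_AA, subst map_upt_Suc_cons) by (simp add: algebra_simps)
  have w1: "pd1 (T' n m) xm x = DL ([AA m (n-1) xm x] @ map (\<lambda>j. AA m (n + 1 + int j) xm x) [0..<Suc K] @ [])"
    unfolding pd1_Det[OF N1] by (rule Det_DL) (auto simp: N nth_Cons algebra_simps simp del: upt_Suc split: nat.split)
  have w2: "T' n m xm x = DL ([AA m n xm x] @ map (\<lambda>j. AA m (n + 1 + int j) xm x) [0..<Suc K] @ [])"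
    unfolding T_Det by (rule Det_DL) (auto simp: N nth_Cons algebra_simps simp del: upt_Suc split: nat.split)
  have v1: "pd1 (T' n m) xm x = DL (AA (m+1) (n-1) xm x # ?U @ [AA m (n + int K + 1) xm x]) + c * T' n m xm x"
  proof -
    have "pd1 (T' n m) xm x = DL ([] @ AA m (n-1) xm x # ?U @ [AA m (n + int K + 1) xm x])"
      apply (subst w1, subst colops_AA) by (simp add: algebra_simps)
    also have "\<dots> = DL ([] @ (\<lambda>i. AA (m+1) (n-1) xm x i + c * AA m n xm x i) # ?U @ [AA m (n + int K + 1) xm x])"
      using sh[of m "n-1"] by simp
    also have "\<dots> = DL ([] @ AA (m+1) (n-1) xm x # ?U @ [AA m (n + int K + 1) xm x])
        + c * DL ([] @ AA m n xm x # ?U @ [AA m (n + int K + 1) xm x])" by (rule DL_lin1)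
    also have "DL ([] @ AA m n xm x # ?U @ [AA m (n + int K + 1) xm x]) = T' n m xm x"
      apply (subst w2, subst colops_AA) by (simp add: algebra_simps)
    finally show ?thesis by simp
  qed
  have w3: "T' (n+1) m xm x = DL ([] @ map (\<lambda>j. AA m (n + 1 + int j) xm x) [0..<Suc (Suc K)] @ [])"
    unfolding T_Det by (rule Det_DL) (auto simp: N algebra_simps simp del: upt_Suc)
  have v3: "T' (n+1) m xm x = DL (?U @ [AA (m+1) (n + int K + 1) xm x, AA m (n + int K + 2) xm x])"
    apply (subst w3, subst colops_AA) by (simp add: algebra_simps)
  have v2: "c * T' (n+1) m xm x = DL (?U @ [AA (m+1) (n + int K + 1) xm x, AA m (n + int K + 1) xm x])"
  proof -
    have "DL (?U @ [AA (m+1) (n + int K + 1) xm x, AA m (n + int K + 1) xm x])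
       = DL ((?U @ [AA (m+1) (n + int K + 1) xm x]) @ (\<lambda>i. AA (m+1) (n + int K + 1) xm x i + c * AA m (n + int K + 2) xm x i) # [])"
      using sh[of m "n + int K + 1"] by (simp add: algebra_simps)
    also have "\<dots> = DL ((?U @ [AA (m+1) (n + int K + 1) xm x]) @ AA (m+1) (n + int K + 1) xm x # [])
       + c * DL ((?U @ [AA (m+1) (n + int K + 1) xm x]) @ AA m (n + int K + 2) xm x # [])" by (rule DL_lin1)
    also have "DL ((?U @ [AA (m+1) (n + int K + 1) xm x]) @ AA (m+1) (n + int K + 1) xm x # []) = 0"
      using DL_dup[of ?U "AA (m+1) (n + int K + 1) xm x" "[]" "[]"] by simp
    finally show ?thesis unfolding v3 by simp
  qed
  have pl2: "DL (?U @ [AA (m+1) (n-1) xm x, AA (m+1) n xm x]) * DL (?U @ [AA (m+1) (n + int K + 1) xm x, AA m (n + int K + 1) xm x])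
    - DL (?U @ [AA (m+1) (n-1) xm x, AA (m+1) (n + int K + 1) xm x]) * DL (?U @ [AA (m+1) n xm x, AA m (n + int K + 1) xm x])
    + DL (?U @ [AA (m+1) (n-1) xm x, AA m (n + int K + 1) xm x]) * DL (?U @ [AA (m+1) n xm x, AA (m+1) (n + int K + 1) xm x]) = 0"
    by (rule pluecker[OF lU])
  show "inverse c * hirota1 (T' n m) (T' n (m+1)) xm x - T' n m xm x * T' n (m+1) xm x
        + T' (n+1) m xm x * T' (n-1) (m+1) xm x = 0"
    unfolding hirota1_def v1 u1 v0 u0 u2 mv1[OF lU] mv2[OF lU]
    by (rule alg2[OF pl2 s cnz v2])
  have w5: "pd2 (T' (n+1) m) xm x = DL ([] @ map (\<lambda>j. AA m (n + 1 + int j) xm x) [0..<Suc K] @ [AA m (n + int K + 3) xm x])"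
    unfolding pd2_Det[OF N1] by (rule Det_DL) (auto simp: N nth_append algebra_simps simp del: upt_Suc)
  have r5: "pd2 (T' (n+1) m) xm x = DL (?U @ [AA m (n + int K + 1) xm x, AA m (n + int K + 3) xm x])"
    apply (subst w5, subst colops_AA) by (simp add: algebra_simps)
  have h1: "DL (?U @ [AA m (n + int K + 1) xm x, AA m (n + int K + 3) xm x])
     = DL (?U @ [AA (m+1) (n + int K + 1) xm x, AA m (n + int K + 3) xm x])
       + c * DL (?U @ [AA m (n + int K + 2) xm x, AA m (n + int K + 3) xm x])"
    using DL_lin1[of ?U "AA (m+1) (n + int K + 1) xm x" c "AA m (n + int K + 2) xm x" "[AA m (n + int K + 3) xm x]"]
      sh[of m "n + int K + 1"] by (simp add: algebra_simps)
  have h2: "DL (?U @ [AA (m+1) (n + int K + 1) xm x, AA m (n + int K + 2) xm x])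
     = DL (?U @ [AA (m+1) (n + int K + 1) xm x, AA (m+1) (n + int K + 2) xm x])
       + c * DL (?U @ [AA (m+1) (n + int K + 1) xm x, AA m (n + int K + 3) xm x])"
    using DL_lin1[of "?U @ [AA (m+1) (n + int K + 1) xm x]" "AA (m+1) (n + int K + 2) xm x" c "AA m (n + int K + 3) xm x" "[]"]
      sh[of m "n + int K + 2"] by (simp add: algebra_simps)
  have h3: "0 = DL (?U @ [AA m (n + int K + 2) xm x, AA (m+1) (n + int K + 2) xm x])
       + c * DL (?U @ [AA m (n + int K + 2) xm x, AA m (n + int K + 3) xm x])"
    using DL_lin1[of "?U @ [AA m (n + int K + 2) xm x]" "AA (m+1) (n + int K + 2) xm x" c "AA m (n + int K + 3) xm x" "[]"]
      sh[of m "n + int K + 2"] DL_dup[of ?U "AA m (n + int K + 2) xm x" "[]" "[]"] by (simp add: algebra_simps)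
  have h4: "DL (?U @ [AA (m+1) n xm x, AA m (n + int K + 1) xm x])
     = DL (?U @ [AA (m+1) n xm x, AA (m+1) (n + int K + 1) xm x])
       + c * DL (?U @ [AA (m+1) n xm x, AA m (n + int K + 2) xm x])"
    using DL_lin1[of "?U @ [AA (m+1) n xm x]" "AA (m+1) (n + int K + 1) xm x" c "AA m (n + int K + 2) xm x" "[]"]
      sh[of m "n + int K + 1"] by (simp add: algebra_simps)
  have h5: "DL (?U @ [AA (m+1) (n + int K + 2) xm x, AA m (n + int K + 2) xm x])
     = - DL (?U @ [AA m (n + int K + 2) xm x, AA (m+1) (n + int K + 2) xm x])"
    using DL_swap[of ?U "AA (m+1) (n + int K + 2) xm x" "AA m (n + int K + 2) xm x" "[]"] by simp
  have pl3: "DL (?U @ [AA (m+1) n xm x, AA (m+1) (n + int K + 1) xm x]) * DL (?U @ [AA (m+1) (n + int K + 2) xm x, AA m (n + int K + 2) xm x])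
    - DL (?U @ [AA (m+1) n xm x, AA (m+1) (n + int K + 2) xm x]) * DL (?U @ [AA (m+1) (n + int K + 1) xm x, AA m (n + int K + 2) xm x])
    + DL (?U @ [AA (m+1) n xm x, AA m (n + int K + 2) xm x]) * DL (?U @ [AA (m+1) (n + int K + 1) xm x, AA (m+1) (n + int K + 2) xm x]) = 0"
    by (rule pluecker[OF lU])
  show "c * hirota2 (T' (n+1) m) (T' n (m+1)) xm x - T' (n+1) m xm x * T' n (m+1) xm x
        + T' n m xm x * T' (n+1) (m+1) xm x = 0"
    unfolding hirota2_def r5 u4 v3 u0 v0 u3 mv1[OF lU]
    by (rule alg3[OF pl3 h1 h2 h3 h4 h5])
qed

end


theorem lemma1:
  fixes N :: nat and c :: complex and cc dd p q xi0 eta0 :: "nat \<Rightarrow> complex"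
  assumes "N \<ge> 1" and "c \<noteq> 0"
    and "\<And>i. i < N \<Longrightarrow> p i \<noteq> 0 \<and> q i \<noteq> 0 \<and> 1 - c * p i \<noteq> 0 \<and> 1 - c * q i \<noteq> 0"
  defines "T \<equiv> tau N c cc dd p q xi0 eta0"
  shows "\<forall>(n::int) (m::int) (xm::complex) (x::complex).
      ((1/2) * hirota12 (T n m) (T n m) xm x - T n m xm x * T n m xm x
        = - (T (n+1) m xm x * T (n-1) m xm x))
    \<and> (inverse c * hirota1 (T n m) (T n (m+1)) xm x - T n m xm x * T n (m+1) xm x
        + T (n+1) m xm x * T (n-1) (m+1) xm x = 0)
    \<and> (c * hirota2 (T (n+1) m) (T n (m+1)) xm x - T (n+1) m xm x * T n (m+1) xm x
        + T n m xm x * T (n+1) (m+1) xm x = 0)"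
proof -
  interpret cas N c cc dd p q xi0 eta0
    by unfold_locales (use assms(2,3) in auto)
  show ?thesis
  proof (intro allI)
    fix n m :: int and xm x :: complex
    show "((1/2) * hirota12 (T n m) (T n m) xm x - T n m xm x * T n m xm x
        = - (T (n+1) m xm x * T (n-1) m xm x))
    \<and> (inverse c * hirota1 (T n m) (T n (m+1)) xm x - T n m xm x * T n (m+1) xm x
        + T (n+1) m xm x * T (n-1) (m+1) xm x = 0)
    \<and> (c * hirota2 (T (n+1) m) (T n (m+1)) xm x - T (n+1) m xm x * T n (m+1) xm x
        + T n m xm x * T (n+1) (m+1) xm x = 0)"
    proof (cases "N = 1")
      case True
      then show ?thesis unfolding T_def by (intro conjI eqs_N1[OF True])
    next
      case False
      define K where "K = N - 2"
      have K: "N = K + 2" unfolding K_def using False assms(1) by simp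
      show ?thesis unfolding T_def by (intro conjI eq1_N2[OF K] eq23_N2[OF K])
    qed
  qed
qed

end
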